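(* Let $X\in\mathcal{S}_{n,p}$ and suppose $f$ satisfies the Riemannian Łojasiewicz gradient inequality at $X$ with exponent $\theta\in(0,\frac12]$ and constant $C>0$, i.e. there is a neighborhood $U\subset\mathcal{S}_{n,p}$ of $X$ such that $\|\mathrm{grad} f(Y)\|_F\ge C|f(Y)-f(X)|^{1-\theta}$ for all $Y\in U$. If $\beta>\max\{8CM_1,1,\bar\beta\}$, then $h$ satisfies the Euclidean Łojasiewicz gradient inequality at $X$ with the same exponent $\theta$, i.e. there exist a neighborhood $U'\subset\mathbb{R}^{n\times p}$ of $X$ and a constant $C'>0$ such that $\|\nabla h(Y)\|_F\ge C'|h(Y)-h(X)|^{1-\theta}$ for all $Y\in U'$.
   Context: $f:\mathbb{R}^{n\times p}\to\mathbb{R}$ ($n\ge p$) is differentiable with $f,\nabla f$ locally Lipschitz. $\Phi(M):=\frac12(M+M^\top)$; $\mathcal{S}_{n,p}=\{Y:Y^\top Y=I_p\}$; for $Y\in\mathcal{S}_{n,p}$, $\mathrm{grad} f(Y):=\nabla f(Y)-Y\Phi(Y^\top\nabla f(Y))$. $\mathcal{A}(X):=\frac32I_p-\frac12X^\top X$, $g(X):=f(X\mathcal{A}(X))$, $h(X):=g(X)+\frac\beta4\|X^\top X-I_p\|_F^2$, $G(X):=\nabla f(Y)|_{Y=X\mathcal{A}(X)}$. $\Omega:=\{X:\|X\|_2\le1+\frac1{12}\}$; $M_1:=\sup_{X\in\Omega}\|G(X)\|_F$; $M_2:=\sup_{X\ne Y\in\Omega}\frac{\|\nabla g(X)-\nabla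 g(Y)\|_F}{\|X-Y\|_F}$; $\bar\beta:=\max\{12M_1,6M_2\}$. *)

theory Defs
  imports "HOL-Analysis.Analysis"
begin

text \<open>Matrices in R^{n x p} are represented as real^'p^'n (rows indexed by 'n).
 The inner product of this type is the Frobenius inner product and norm is the
 Frobenius norm.\<close>

type_synonym ('n,'p) mat = "real^'p^'n"

definition egrad :: "(real^'p^'n \<Rightarrow> real) \<Rightarrow> real^'p^'n \<Rightarrow> real^'p^'n" where
  "egrad F Y = (THE G. (F has_derivative (\<lambda>H. G \<bullet> H)) (at Y))"

definition locally_lipschitz :: "('a::metric_space \<Rightarrow> 'b::metric_space) \<Rightarrow> bool" where
  "locally_lipschitz F \<longleftrightarrow> (\<forall>x. \<exists>e>0. \<exists>L. \<forall>y\<in>ball x e. \<forall>z\<in>ball x e. dist (F y) (F z) \<le> L * dist y z)"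

definition symm_part :: "real^'p^'p \<Rightarrow> real^'p^'p" where
  "symm_part M = (1/2) *\<^sub>R (M + transpose M)"

definition stiefel :: "(real^'p^'n) set" where
  "stiefel = {Y. transpose Y ** Y = mat 1}"

definition rgrad :: "(real^'p^'n \<Rightarrow> real) \<Rightarrow> real^'p^'n \<Rightarrow> real^'p^'n" where
  "rgrad F Y = egrad F Y - Y ** symm_part (transpose Y ** egrad F Y)"

definition Acal :: "real^'p^'n \<Rightarrow> real^'p^'p" where
  "Acal X = (3/2) *\<^sub>R mat 1 - (1/2) *\<^sub>R (transpose X ** X)"

definition gfun :: "(real^'p^'n \<Rightarrow> real) \<Rightarrow> real^'p^'n \<Rightarrow> real" where
  "gfun F X = F (X ** Acal X)"

definition hfun :: "(real^'p^'n \<Rightarrow> real) \<Rightarrow> real \<Rightarrow> real^'p^'n \<Rightarrow> real" where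
  "hfun F \<beta> X = gfun F X + \<beta> / 4 * (norm (transpose X ** X - mat 1))\<^sup>2"

definition Gfun :: "(real^'p^'n \<Rightarrow> real) \<Rightarrow> real^'p^'n \<Rightarrow> real^'p^'n" where
  "Gfun F X = egrad F (X ** Acal X)"

definition Omega :: "(real^'p^'n) set" where
  "Omega = {X. onorm (\<lambda>v. X *v v) \<le> 1 + 1/12}"

definition M1 :: "(real^'p^'n \<Rightarrow> real) \<Rightarrow> real" where
  "M1 F = (SUP X\<in>(Omega :: (real^'p^'n) set). norm (Gfun F X))"

definition M2 :: "(real^'p^'n \<Rightarrow> real) \<Rightarrow> real" where
  "M2 F = Sup {norm (egrad (gfun F) X - egrad (gfun F) Y) / norm (X - Y) | X Y.
                X \<in> (Omega :: (real^'p^'n) set) \<and> Y \<in> Omega \<and> X \<noteq> Y}"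

definition beta_bar :: "(real^'p^'n \<Rightarrow> real) \<Rightarrow> real" where
  "beta_bar F = max (12 * M1 F) (6 * M2 F)"

end

theory Submission
  imports Defs
begin

lemma inner_mat: "(A::real^'p^'n) \<bullet> B = (\<Sum>i\<in>UNIV. \<Sum>j\<in>UNIV. A$i$j * B$i$j)"
  by (simp add: inner_vec_def)

lemma norm_sq_mat: "(norm (A::real^'p^'n))^2 = (\<Sum>i\<in>UNIV. \<Sum>j\<in>UNIV. (A$i$j)^2)"
  unfolding power2_norm_eq_inner inner_mat by (simp add: power2_eq_square)

lemma mm_comp: "((A::real^'m^'n) ** (B::real^'p^'m))$i$j = (\<Sum>k\<in>UNIV. A$i$k * B$k$j)"
  by (simp add: matrix_matrix_mult_def)

lemma transpose_comp[simp]: "transpose A $ i $ j = A $ j $ i"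
  by (simp add: transpose_def)

lemma inner_transpose: "transpose (A::real^'p^'n) \<bullet> transpose B = A \<bullet> B"
  unfolding inner_mat transpose_comp by (rule sum.swap)

lemma norm_transpose: "norm (transpose (A::real^'p^'n)) = norm A"
  by (metis inner_transpose norm_eq_sqrt_inner)

lemma inner_mm_left: "((A::real^'m^'n) ** (B::real^'p^'m)) \<bullet> C = B \<bullet> (transpose A ** C)"
proof -
  have "((A ** B) \<bullet> C) = (\<Sum>i\<in>UNIV. \<Sum>j\<in>UNIV. \<Sum>k\<in>UNIV. A$i$k * B$k$j * C$i$j)"
    by (simp add: inner_mat mm_comp sum_distrib_right)
  also have "\<dots> = (\<Sum>i\<in>UNIV. \<Sum>k\<in>UNIV. \<Sum>j\<in>UNIV. A$i$k * B$k$j * C$i$j)"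
    by (intro sum.cong refl sum.swap)
  also have "\<dots> = (\<Sum>k\<in>UNIV. \<Sum>i\<in>UNIV. \<Sum>j\<in>UNIV. A$i$k * B$k$j * C$i$j)"
    by (rule sum.swap)
  also have "\<dots> = (\<Sum>k\<in>UNIV. \<Sum>j\<in>UNIV. \<Sum>i\<in>UNIV. A$i$k * B$k$j * C$i$j)"
    by (intro sum.cong refl sum.swap)
  also have "\<dots> = B \<bullet> (transpose A ** C)"
    by (simp add: inner_mat mm_comp sum_distrib_left mult_ac)
  finally show ?thesis .
qed

lemma inner_mm_right: "((A::real^'m^'n) ** (B::real^'p^'m)) \<bullet> C = A \<bullet> (C ** transpose B)"
proof -
  have "(A ** B) \<bullet> C = transpose (A ** B) \<bullet> transpose C" by (simp add: inner_transpose)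
  also have "\<dots> = (transpose B ** transpose A) \<bullet> transpose C" by (simp add: matrix_transpose_mul)
  also have "\<dots> = transpose A \<bullet> (B ** transpose C)" by (simp add: inner_mm_left)
  also have "\<dots> = transpose A \<bullet> transpose (C ** transpose B)" by (simp add: matrix_transpose_mul)
  also have "\<dots> = A \<bullet> (C ** transpose B)" by (simp add: inner_transpose)
  finally show ?thesis .
qed

lemma norm_sq_rows: "(norm (A::real^'p^'n))^2 = (\<Sum>i\<in>UNIV. (norm (A$i))^2)"
  by (simp add: power2_norm_eq_inner inner_vec_def)

lemma norm_mm: "norm ((A::real^'m^'n) ** (B::real^'p^'m)) \<le> norm A * norm B"
proof -
  have c: "((A ** B)$i$j)^2 \<le> (norm (A$i))^2 * (norm (column j B))^2" for i j
  proof -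
    have "(A ** B)$i$j = A$i \<bullet> column j B"
      by (simp add: mm_comp inner_vec_def column_def)
    then show ?thesis using Cauchy_Schwarz_ineq[of "A$i" "column j B"]
      by (simp add: power2_norm_eq_inner)
  qed
  have "(norm (A ** B))^2 \<le> (\<Sum>i\<in>UNIV. \<Sum>j\<in>UNIV. (norm (A$i))^2 * (norm (column j B))^2)"
    unfolding norm_sq_mat by (intro sum_mono c)
  also have "\<dots> = (\<Sum>i\<in>UNIV. (norm (A$i))^2) * (\<Sum>j\<in>UNIV. (norm (column j B))^2)"
    by (simp add: sum_product)
  also have "(\<Sum>j\<in>UNIV. (norm (column j B))^2) = (norm (transpose B))^2"
    by (simp add: norm_sq_rows transpose_def column_def)
  also have "(\<Sum>i\<in>UNIV. (norm (A$i))^2) = (norm A)^2"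
    by (rule norm_sq_rows[symmetric])
  finally have "(norm (A ** B))^2 \<le> (norm A * norm B)^2"
    by (simp add: norm_transpose power_mult_distrib)
  then show ?thesis by (rule power2_le_imp_le) simp
qed

lemma bb_mm: "bounded_bilinear (\<lambda>(A::real^'m^'n) (B::real^'p^'m). A ** B)"
proof
  fix a a' :: "real^'m^'n" and b b' :: "real^'p^'m" and r :: real
  show "(a + a') ** b = a ** b + a' ** b" by (simp add: matrix_matrix_mult_def vec_eq_iff sum.distrib algebra_simps)
  show "a ** (b + b') = a ** b + a ** b'" by (simp add: matrix_add_ldistrib)
  show "(r *\<^sub>R a) ** b = r *\<^sub>R (a ** b)" by (simp add: scalar_matrix_assoc)
  show "a ** (r *\<^sub>R b) = r *\<^sub>R (a ** b)" by (simp add: matrix_scalar_ac scalar_matrix_assoc)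
  show "\<exists>K. \<forall>a b. norm (a ** b) \<le> norm (a::real^'m^'n) * norm (b::real^'p^'m) * K"
    by (rule exI[of _ 1]) (simp add: norm_mm)
qed

lemma bl_transpose: "bounded_linear (transpose :: real^'p^'n \<Rightarrow> real^'n^'p)"
proof
  fix x y :: "real^'p^'n" and r :: real
  show "transpose (x + y) = transpose x + transpose y" by (simp add: vec_eq_iff)
  show "transpose (r *\<^sub>R x) = r *\<^sub>R transpose x" by (simp add: transpose_scalar)
  show "\<exists>K. \<forall>x. norm (transpose (x::real^'p^'n)) \<le> norm x * K"
    by (rule exI[of _ 1]) (simp add: norm_transpose)
qed

lemma mm_add_left: "((A::real^'m^'n) + B) ** (C::real^'p^'m) = A ** C + B ** C"
  by (simp add: matrix_matrix_mult_def vec_eq_iff sum.distrib algebra_simps)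
lemma mm_add_right: "(A::real^'m^'n) ** ((B::real^'p^'m) + C) = A ** B + A ** C"
  by (rule matrix_add_ldistrib)
lemma mm_scaleR_left: "(c *\<^sub>R (A::real^'m^'n)) ** (B::real^'p^'m) = c *\<^sub>R (A ** B)"
  by (simp add: scalar_matrix_assoc)
lemma mm_scaleR_right: "(A::real^'m^'n) ** (c *\<^sub>R (B::real^'p^'m)) = c *\<^sub>R (A ** B)"
  by (simp add: matrix_scalar_ac scalar_matrix_assoc)
lemma mm_neg_left: "(- (A::real^'m^'n)) ** (B::real^'p^'m) = - (A ** B)"
  using mm_scaleR_left[of "-1" A B] by simp
lemma mm_neg_right: "(A::real^'m^'n) ** (- (B::real^'p^'m)) = - (A ** B)"
  using mm_scaleR_right[of A "-1" B] by simp
lemma mm_diff_left: "((A::real^'m^'n) - B) ** (C::real^'p^'m) = A ** C - B ** C"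
  using mm_add_left[of A "-B" C] by (simp add: mm_neg_left)
lemma mm_diff_right: "(A::real^'m^'n) ** ((B::real^'p^'m) - C) = A ** B - A ** C"
  using mm_add_right[of A B "-C"] by (simp add: mm_neg_right)
lemma transpose_add: "transpose ((A::real^'p^'n) + B) = transpose A + transpose B"
  by (simp add: vec_eq_iff)
lemma transpose_diff: "transpose ((A::real^'p^'n) - B) = transpose A - transpose B"
  by (simp add: vec_eq_iff)
lemma transpose_neg: "transpose (- (A::real^'p^'n)) = - transpose A"
  by (simp add: vec_eq_iff)

lemma vnm: "(numeral k :: real^'p^'n) * B = (numeral k :: real) *\<^sub>R B"
  by (simp add: vec_eq_iff)
lemma vnm2: "B * (numeral k :: real^'p^'n) = (numeral k :: real) *\<^sub>R B"
  by (simp add: vec_eq_iff)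

lemmas mm_simps = vnm vnm2 mm_add_left mm_add_right mm_scaleR_left mm_scaleR_right mm_neg_left mm_neg_right
  mm_diff_left mm_diff_right transpose_add transpose_diff transpose_neg transpose_scalar
  matrix_transpose_mul matrix_mul_assoc

lemma egrad_eq:
  assumes "(F has_derivative (\<lambda>H. G \<bullet> H)) (at Y)"
  shows "egrad F Y = G"
  unfolding egrad_def
proof (rule the_equality)
  show "(F has_derivative (\<lambda>H. G \<bullet> H)) (at Y)" by fact
  fix G' assume "(F has_derivative (\<lambda>H. G' \<bullet> H)) (at Y)"
  from has_derivative_unique[OF assms this] have "\<And>H. G \<bullet> H = G' \<bullet> H" by metis
  from this[of "G - G'"] have "(G - G') \<bullet> (G - G') = 0" by (simp add: inner_diff_left)
  then show "G' = G" by simp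
qed

lemma egrad_works:
  fixes F :: "real^'p^'n \<Rightarrow> real"
  assumes d: "(F has_derivative D) (at Y)"
  shows "(F has_derivative (\<lambda>H. egrad F Y \<bullet> H)) (at Y)" "\<And>H. egrad F Y \<bullet> H = D H"
proof -
  define G where "G = (\<Sum>b\<in>Basis. D b *\<^sub>R b)"
  have lin: "linear D" using d by (rule has_derivative_linear)
  have eq: "D H = G \<bullet> H" for H
  proof -
    have "D H = D (\<Sum>b\<in>Basis. (H \<bullet> b) *\<^sub>R b)" by (simp add: euclidean_representation)
    also have "\<dots> = (\<Sum>b\<in>Basis. (H \<bullet> b) * D b)"
      by (simp add: linear_sum[OF lin] linear_scale[OF lin])
    also have "\<dots> = G \<bullet> H" unfolding G_def inner_sum_left
      by (intro sum.cong refl) (simp add: inner_commute)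
    finally show ?thesis .
  qed
  have dd: "(F has_derivative (\<lambda>H. G \<bullet> H)) (at Y)"
    using d by (rule has_derivative_eq_rhs) (simp add: fun_eq_iff eq)
  have "egrad F Y = G" by (rule egrad_eq[OF dd])
  then show "(F has_derivative (\<lambda>H. egrad F Y \<bullet> H)) (at Y)" "\<And>H. egrad F Y \<bullet> H = D H"
    using dd eq by auto
qed

definition Em :: "real^'p^'n \<Rightarrow> real^'p^'p" where
  "Em Y = transpose Y ** Y - mat 1"

definition Phi :: "real^'p^'n \<Rightarrow> real^'p^'n" where
  "Phi Y = Y ** Acal Y"

definition DPhi :: "real^'p^'n \<Rightarrow> real^'p^'n \<Rightarrow> real^'p^'n" where
  "DPhi Y H = H ** Acal Y - (1/2) *\<^sub>R (Y ** (transpose H ** Y + transpose Y ** H))"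

lemma deriv_TY: "((\<lambda>Y::real^'p^'n. transpose Y ** Y) has_derivative
     (\<lambda>H. transpose Y ** H + transpose H ** Y)) (at Y)"
proof -
  have t: "(transpose has_derivative transpose) (at Y)"
    by (rule bounded_linear_imp_has_derivative[OF bl_transpose])
  show ?thesis using bounded_bilinear.FDERIV[OF bb_mm t has_derivative_ident] by simp
qed

lemma Acal_alt: "Acal Y = (3/2) *\<^sub>R mat 1 - (1/2) *\<^sub>R (transpose Y ** Y)"
  by (simp add: Acal_def)

lemma deriv_Acal: "(Acal has_derivative
     (\<lambda>H. - (1/2) *\<^sub>R (transpose H ** Y + transpose Y ** H))) (at (Y::real^'p^'n))"
proof -
  have "((\<lambda>Y::real^'p^'n. (3/2) *\<^sub>R (mat 1::real^'p^'p) - (1/2) *\<^sub>R (transpose Y ** Y)) has_derivative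
     (\<lambda>H. 0 - (1/2) *\<^sub>R (transpose Y ** H + transpose H ** Y))) (at Y)"
    by (intro has_derivative_diff has_derivative_const has_derivative_scaleR_right deriv_TY)
  then show ?thesis unfolding Acal_def[abs_def]
    by (rule has_derivative_eq_rhs) (simp add: fun_eq_iff add.commute)
qed

lemma deriv_Phi: "(Phi has_derivative DPhi Y) (at (Y::real^'p^'n))"
proof -
  have "((\<lambda>Y. Y ** Acal Y) has_derivative
     (\<lambda>H. Y ** (- (1/2) *\<^sub>R (transpose H ** Y + transpose Y ** H)) + H ** Acal Y)) (at Y)"
    by (rule bounded_bilinear.FDERIV[OF bb_mm has_derivative_ident deriv_Acal])
  then show ?thesis unfolding Phi_def[abs_def]
    by (rule has_derivative_eq_rhs)
      (simp add: fun_eq_iff DPhi_def mm_simps algebra_simps)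
qed

lemma deriv_pen: "((\<lambda>Y::real^'p^'n. b / 4 * (norm (transpose Y ** Y - mat 1))^2) has_derivative
     (\<lambda>H. b / 2 * (Em Y \<bullet> (transpose Y ** H + transpose H ** Y)))) (at Y)"
proof -
  have d: "((\<lambda>Y::real^'p^'n. transpose Y ** Y - mat 1) has_derivative
     (\<lambda>H. transpose Y ** H + transpose H ** Y)) (at Y)"
    using has_derivative_diff[OF deriv_TY has_derivative_const] by simp
  have dd: "((\<lambda>Y::real^'p^'n. b / 4 * ((transpose Y ** Y - mat 1) \<bullet> (transpose Y ** Y - mat 1))) has_derivative
     (\<lambda>H. b / 4 * ((transpose Y ** Y - mat 1) \<bullet> (transpose Y ** H + transpose H ** Y)
          + (transpose Y ** H + transpose H ** Y) \<bullet> (transpose Y ** Y - mat 1)))) (at Y)"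
    by (intro has_derivative_mult_right has_derivative_inner d)
  have eqf: "(\<lambda>Y::real^'p^'n. b / 4 * (norm (transpose Y ** Y - mat 1))^2) =
     (\<lambda>Y::real^'p^'n. b / 4 * ((transpose Y ** Y - mat 1) \<bullet> (transpose Y ** Y - mat 1)))"
    by (simp add: power2_norm_eq_inner)
  show ?thesis unfolding eqf
    by (rule has_derivative_eq_rhs[OF dd]) (simp add: fun_eq_iff Em_def inner_commute)
qed

lemma hfun_alt: "hfun f b = (\<lambda>Y. f (Phi Y) + b / 4 * (norm (transpose Y ** Y - mat 1))^2)"
  by (simp add: fun_eq_iff hfun_def gfun_def Phi_def)

lemma f_deriv:
  assumes "\<forall>Z. f differentiable (at Z)"
  shows "(f has_derivative (\<lambda>H. egrad f Z \<bullet> H)) (at Z)"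
proof -
  from assms obtain D where "(f has_derivative D) (at Z)" unfolding differentiable_def by blast
  then show ?thesis by (rule egrad_works(1))
qed

lemma h_deriv:
  assumes "\<forall>Z. f differentiable (at Z)"
  shows "((hfun f b) has_derivative (\<lambda>H. egrad f (Phi Y) \<bullet> DPhi Y H
      + b / 2 * (Em Y \<bullet> (transpose Y ** H + transpose H ** Y)))) (at Y)"
  unfolding hfun_alt
  by (intro has_derivative_add deriv_pen has_derivative_compose[OF deriv_Phi f_deriv[OF assms]])

lemma egrad_h:
  assumes "\<forall>Z. f differentiable (at Z)"
  shows "egrad (hfun f b) Y \<bullet> H = egrad f (Phi Y) \<bullet> DPhi Y H
      + b / 2 * (Em Y \<bullet> (transpose Y ** H + transpose H ** Y))"
  using egrad_works(2)[OF h_deriv[OF assms]] by blast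

lemma Acal_E: "Acal Y = mat 1 - (1/2) *\<^sub>R Em Y"
  by (simp add: Acal_def Em_def algebra_simps vec_eq_iff mat_def)

lemma TY_E: "transpose Y ** Y = Em Y + mat 1"
  by (simp add: Em_def)

lemma Em_sym: "transpose (Em Y) = Em Y"
  by (simp add: Em_def mm_simps)

lemma vs1: fixes a b :: "'a::real_vector" shows "a - (1/2) *\<^sub>R b - (1/2) *\<^sub>R (b + a + (b + a)) = -(3/2) *\<^sub>R b"
proof -
  have "(3/2) *\<^sub>R b = b + (1/2) *\<^sub>R b" using scaleR_add_left[of 1 "1/2" b] by simp
  then show ?thesis by (simp add: algebra_simps flip: scaleR_2)
qed

lemma DPhi_YE: "DPhi Y (Y ** Em Y) = -(3/2) *\<^sub>R (Y ** (Em Y ** Em Y))"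
proof -
  define E where "E = Em Y"
  have T: "transpose Y ** Y = E + mat 1" by (simp add: E_def TY_E)
  have S: "transpose E = E" by (simp add: E_def Em_sym)
  have "DPhi Y (Y ** E) = (Y ** E) ** (mat 1 - (1/2) *\<^sub>R E)
     - (1/2) *\<^sub>R (Y ** ((transpose E ** transpose Y) ** Y + (transpose Y ** Y) ** E))"
    by (simp add: DPhi_def Acal_E E_def matrix_transpose_mul matrix_mul_assoc)
  also have "\<dots> = (Y ** E) ** (mat 1 - (1/2) *\<^sub>R E)
     - (1/2) *\<^sub>R (Y ** (E ** (E + mat 1) + (E + mat 1) ** E))"
    by (simp add: T S flip: matrix_mul_assoc)
  also have "\<dots> = Y ** E - (1/2) *\<^sub>R (Y ** E ** E) - (1/2) *\<^sub>R (Y ** E ** E + Y ** E + (Y ** E ** E + Y ** E))"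
    by (simp only: mm_simps matrix_mul_lid matrix_mul_rid)
  also have "\<dots> = -(3/2) *\<^sub>R (Y ** (E ** E))"
    using vs1[of "Y ** E" "Y ** E ** E"] by (simp only: matrix_mul_assoc)
  finally show ?thesis by (simp add: E_def)
qed

lemma pen_YE: "transpose Y ** (Y ** Em Y) + transpose (Y ** Em Y) ** Y = 2 *\<^sub>R (Em Y ** Em Y + Em Y)"
proof -
  define E where "E = Em Y"
  have T: "transpose Y ** Y = E + mat 1" by (simp add: E_def TY_E)
  have S: "transpose E = E" by (simp add: E_def Em_sym)
  have "transpose Y ** (Y ** E) + transpose (Y ** E) ** Y
       = (transpose Y ** Y) ** E + E ** (transpose Y ** Y)"
    by (simp add: matrix_transpose_mul S matrix_mul_assoc)
  also have "\<dots> = 2 *\<^sub>R (E ** E + E)" by (simp add: T mm_simps vec_eq_iff algebra_simps)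
  finally show ?thesis by (simp add: E_def)
qed

lemma stiefel_R:
  assumes Z: "Z \<in> stiefel"
  shows "DPhi Z (rgrad f Z) = rgrad f Z" "egrad f Z \<bullet> rgrad f Z = (norm (rgrad f Z))^2"
proof -
  have I: "transpose Z ** Z = mat 1" using Z by (simp add: stiefel_def)
  define N where "N = egrad f Z"
  define M where "M = transpose Z ** N"
  define S where "S = (1/2) *\<^sub>R (M + transpose M)"
  have R: "rgrad f Z = N - Z ** S" by (simp add: rgrad_def N_def M_def S_def symm_part_def)
  have ZR: "transpose Z ** rgrad f Z = (1/2) *\<^sub>R (M - transpose M)"
    unfolding R by (simp add: mm_simps I M_def[symmetric] S_def vec_eq_iff algebra_simps)
  have RZ: "transpose (rgrad f Z) ** Z = (1/2) *\<^sub>R (transpose M - M)"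
  proof -
    have "transpose (rgrad f Z) ** Z = transpose (transpose Z ** rgrad f Z)"
      by (simp add: matrix_transpose_mul)
    also have "\<dots> = (1/2) *\<^sub>R (transpose M - M)" by (simp add: ZR mm_simps)
    finally show ?thesis .
  qed
  have A: "Acal Z = mat 1" by (simp add: Acal_def I vec_eq_iff mat_def)
  show "DPhi Z (rgrad f Z) = rgrad f Z"
    by (simp add: DPhi_def A ZR RZ algebra_simps)
  have "N \<bullet> rgrad f Z = (rgrad f Z + Z ** S) \<bullet> rgrad f Z" by (simp add: R)
  also have "\<dots> = (norm (rgrad f Z))^2 + S \<bullet> (transpose Z ** rgrad f Z)"
    by (simp add: inner_add_left inner_mm_left power2_norm_eq_inner)
  also have "S \<bullet> (transpose Z ** rgrad f Z) = 0"
  proof -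
    have "M \<bullet> transpose M = transpose M \<bullet> M" by (simp add: inner_commute)
    moreover have "transpose M \<bullet> transpose M = M \<bullet> M" by (simp add: inner_transpose)
    ultimately show ?thesis
      by (simp add: ZR S_def inner_add_left inner_diff_right algebra_simps)
  qed
  finally show "egrad f Z \<bullet> rgrad f Z = (norm (rgrad f Z))^2" by (simp add: N_def)
qed

lemma Phi_E: "Phi Y = Y ** (mat 1 - (1/2) *\<^sub>R Em Y)"
  by (simp add: Phi_def Acal_E)

lemma Phi_minus: "Phi Y - Y = -(1/2) *\<^sub>R (Y ** Em Y)"
  by (simp add: Phi_E mm_simps)

lemma Em_Phi: "Em (Phi Y) = -(3/4) *\<^sub>R (Em Y ** Em Y) + (1/4) *\<^sub>R (Em Y ** Em Y ** Em Y)"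
proof -
  define E where "E = Em Y"
  define A where "A = mat 1 - (1/2) *\<^sub>R E"
  have T: "transpose Y ** Y = E + mat 1" by (simp add: E_def TY_E)
  have S: "transpose E = E" by (simp add: E_def Em_sym)
  have TA: "transpose A = A" by (simp add: A_def mm_simps S)
  have "Em (Phi Y) = transpose (Y ** A) ** (Y ** A) - mat 1"
    by (simp add: Em_def Phi_E A_def E_def)
  also have "\<dots> = A ** (transpose Y ** Y) ** A - mat 1"
    by (simp add: matrix_transpose_mul TA matrix_mul_assoc)
  also have "\<dots> = -(3/4) *\<^sub>R (E ** E) + (1/4) *\<^sub>R (E ** E ** E)"
    unfolding T A_def
    apply (simp only: mm_simps matrix_mul_lid matrix_mul_rid)
    apply (simp add: vec_eq_iff algebra_simps)
    done
  finally show ?thesis by (simp add: E_def)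
qed

lemma norm_YM_sq: "(norm (Y ** M))^2 \<le> (1 + norm (Em Y)) * (norm M)^2"
proof -
  have "(norm (Y ** M))^2 = M \<bullet> ((transpose Y ** Y) ** M)"
    by (simp add: power2_norm_eq_inner inner_mm_left matrix_mul_assoc)
  also have "\<dots> = M \<bullet> M + M \<bullet> (Em Y ** M)"
    by (simp add: TY_E mm_simps inner_add_right)
  also have "M \<bullet> (Em Y ** M) \<le> norm M * (norm (Em Y) * norm M)"
    by (rule order_trans[OF norm_cauchy_schwarz]) (intro mult_left_mono norm_mm norm_ge_zero)
  finally show ?thesis by (simp add: power2_norm_eq_inner[symmetric] algebra_simps power2_eq_square)
qed

lemma norm_YM: assumes "norm (Em Y) \<le> 1/4" shows "norm (Y ** M) \<le> 9/8 * norm M"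
proof -
  have "(norm (Y ** M))^2 \<le> (9/8 * norm M)^2"
  proof -
    have "(1 + norm (Em Y)) * (norm M)^2 \<le> (81/64) * (norm M)^2"
      by (rule mult_right_mono) (use assms in auto)
    moreover have "(9/8 * norm M)^2 = 81/64 * (norm M)^2" by (simp add: power2_eq_square)
    ultimately show ?thesis using norm_YM_sq[of Y M] by linarith
  qed
  then show ?thesis by (rule power2_le_imp_le) simp
qed

lemma norm_Em_Phi: assumes "norm (Em Y) \<le> 1" shows "norm (Em (Phi Y)) \<le> (norm (Em Y))^2"
proof -
  define e where "e = norm (Em Y)"
  have e0: "0 \<le> e" by (simp add: e_def)
  have "norm (Em (Phi Y)) \<le> 3/4 * norm (Em Y ** Em Y) + 1/4 * norm (Em Y ** Em Y ** Em Y)"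
    unfolding Em_Phi by (rule order_trans[OF norm_triangle_ineq]) simp
  also have "\<dots> \<le> 3/4 * e^2 + 1/4 * e^3"
  proof -
    have a: "norm (Em Y ** Em Y) \<le> e^2" using norm_mm[of "Em Y" "Em Y"] by (simp add: e_def power2_eq_square)
    have "norm (Em Y ** Em Y ** Em Y) \<le> norm (Em Y ** Em Y) * e" using norm_mm by (simp add: e_def)
    also have "\<dots> \<le> e^2 * e" by (intro mult_right_mono a e0)
    finally have b: "norm (Em Y ** Em Y ** Em Y) \<le> e^3" by (simp add: power3_eq_cube power2_eq_square)
    show ?thesis using a b by simp
  qed
  also have "\<dots> \<le> e^2"
  proof -
    have "e^3 \<le> e^2" using assms e0 by (simp add: e_def power_decreasing)
    then show ?thesis by simp
  qed
  finally show ?thesis by (simp add: e_def)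
qed

primrec NS :: "real^'p^'n \<Rightarrow> nat \<Rightarrow> real^'p^'n" where
  "NS Y 0 = Y" | "NS Y (Suc k) = Phi (NS Y k)"

lemma NS_bound:
  assumes "norm (Em Y) \<le> 1/4"
  shows "norm (Em (NS Y (Suc k))) \<le> (norm (Em Y))^2 * (1/2)^k"
proof (induction k)
  case 0
  then show ?case using norm_Em_Phi[of Y] assms by simp
next
  case (Suc k)
  define e where "e = norm (Em Y)"
  have e0: "0 \<le> e" "e \<le> 1/4" using assms by (auto simp: e_def)
  define a where "a = norm (Em (NS Y (Suc k)))"
  have a: "a \<le> e^2 * (1/2)^k" using Suc by (simp add: a_def e_def)
  have "e^2 * (1/2)^k \<le> 1/2"
  proof -
    have "e^2 \<le> (1/4)^2" using e0 by (intro power_mono) auto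
    then have "e^2 \<le> 1/16" by (simp add: power2_eq_square)
    moreover have "(1/2::real)^k \<le> 1" by (simp add: power_le_one)
    then have "e^2 * (1/2)^k \<le> e^2 * 1" by (intro mult_left_mono) auto
    ultimately show ?thesis by linarith
  qed
  then have a1: "a \<le> 1/2" using a by simp
  have a0: "0 \<le> a" by (simp add: a_def)
  have "norm (Em (NS Y (Suc (Suc k)))) \<le> a^2"
    using norm_Em_Phi[of "NS Y (Suc k)"] a1 by (simp add: a_def)
  also have "a^2 \<le> a * (1/2)" using mult_left_mono[OF a1 a0] by (simp add: power2_eq_square)
  also have "\<dots> \<le> e^2 * (1/2)^(Suc k)" using a by simp
  finally show ?case by (simp add: e_def)
qed

lemma continuous_Em: "isCont Em (Y::real^'p^'n)"
proof -
  have "isCont (\<lambda>Y::real^'p^'n. transpose Y ** Y - mat 1) Y"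
    by (intro continuous_intros bounded_bilinear.isCont[OF bb_mm]
          bounded_linear.isCont[OF bl_transpose] continuous_ident)
  then show ?thesis by (simp add: Em_def[abs_def])
qed

lemma proj_exists:
  fixes Y :: "real^'p^'n"
  assumes e: "norm (Em Y) \<le> 1/4"
  shows "\<exists>Z. Z \<in> stiefel \<and> norm (Y - Z) \<le> 2 * norm (Em Y) \<and> norm (Phi Y - Z) \<le> 2 * (norm (Em Y))^2"
proof -
  define e where "e = norm (Em Y)"
  have e0: "0 \<le> e" "e \<le> 1/4" using e by (auto simp: e_def)
  define s where "s k = NS Y (Suc (Suc k)) - NS Y (Suc k)" for k
  have Ek: "norm (Em (NS Y (Suc k))) \<le> 1/4" for k
  proof -
    have "norm (Em (NS Y (Suc k))) \<le> e^2 * (1/2)^k" using NS_bound[OF e] by (simp add: e_def)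
    also have "\<dots> \<le> e^2 * 1" by (intro mult_left_mono) (auto simp: power_le_one)
    also have "\<dots> \<le> (1/4)^2" using e0 by (simp add: power_mono)
    also have "\<dots> \<le> 1/4" by (simp add: power2_eq_square)
    finally show ?thesis .
  qed
  have sb: "norm (s k) \<le> e^2 * (1/2)^k" for k
  proof -
    have "norm (s k) = norm (-(1/2) *\<^sub>R (NS Y (Suc k) ** Em (NS Y (Suc k))))"
      by (simp add: s_def Phi_minus del: NS.simps(2)) (simp add: Phi_minus)
    also have "\<dots> = 1/2 * norm (NS Y (Suc k) ** Em (NS Y (Suc k)))" by simp
    also have "\<dots> \<le> 1/2 * (9/8 * norm (Em (NS Y (Suc k))))"
      using norm_YM[OF Ek[of k], of "Em (NS Y (Suc k))"] by simp
    also have "\<dots> \<le> norm (Em (NS Y (Suc k)))" by simp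
    also have "\<dots> \<le> e^2 * (1/2)^k" using NS_bound[OF e] by (simp add: e_def)
    finally show ?thesis .
  qed
  have gs: "summable (\<lambda>k. e^2 * (1/2::real)^k)" by (intro summable_mult summable_geometric) simp
  have gsum: "(\<Sum>k. e^2 * (1/2::real)^k) = 2 * e^2"
    by (simp add: suminf_mult suminf_geometric)
  have ss: "summable s" by (rule summable_comparison_test'[OF gs sb])
  define Z where "Z = Phi Y + suminf s"
  have tel: "NS Y (Suc n) = Phi Y + (\<Sum>k<n. s k)" for n
    using sum_lessThan_telescope[of "\<lambda>k. NS Y (Suc k)" n] by (simp add: s_def del: NS.simps(2)) simp
  have lim: "(\<lambda>n. NS Y (Suc n)) \<longlonglongrightarrow> Z"
    unfolding tel Z_def by (intro tendsto_add tendsto_const summable_LIMSEQ ss)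
  have d1: "norm (Phi Y - Z) \<le> 2 * e^2"
  proof -
    have "norm (Phi Y - Z) = norm (suminf s)" by (simp add: Z_def)
    also have "\<dots> \<le> 2 * e^2" using norm_suminf_le[OF sb gs] gsum by simp
    finally show ?thesis .
  qed
  have d0: "norm (Y - Phi Y) \<le> 9/16 * e"
  proof -
    have "norm (Y - Phi Y) = 1/2 * norm (Y ** Em Y)"
      by (simp add: norm_minus_commute[of Y] Phi_minus)
    also have "\<dots> \<le> 1/2 * (9/8 * e)" using norm_YM[OF e, of "Em Y"] by (simp add: e_def)
    finally show ?thesis by simp
  qed
  have "norm (Y - Z) \<le> norm (Y - Phi Y) + norm (Phi Y - Z)" using norm_triangle_ineq[of "Y - Phi Y" "Phi Y - Z"] by simp
  also have "\<dots> \<le> 2 * e"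
  proof -
    have "e^2 \<le> e/4" using mult_left_mono[OF e0(2) e0(1)] by (simp add: power2_eq_square)
    then show ?thesis using d0 d1 e0 by linarith
  qed
  finally have dY: "norm (Y - Z) \<le> 2 * e" .
  have l1: "(\<lambda>n. Em (NS Y (Suc n))) \<longlonglongrightarrow> Em Z"
    by (rule isCont_tendsto_compose[OF continuous_Em lim])
  have l2: "(\<lambda>n. Em (NS Y (Suc n))) \<longlonglongrightarrow> 0"
  proof (rule tendsto_norm_zero_cancel, rule Lim_null_comparison)
    show "\<forall>\<^sub>F n in sequentially. norm (norm (Em (NS Y (Suc n)))) \<le> e^2 * (1/2)^n"
      using NS_bound[OF e] by (simp add: e_def)
    show "(\<lambda>n. e^2 * (1/2::real)^n) \<longlonglongrightarrow> 0"
      by (intro tendsto_mult_right_zero LIMSEQ_power_zero) simp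
  qed
  have "Em Z = 0" using LIMSEQ_unique[OF l1 l2] .
  then have "Z \<in> stiefel" by (simp add: Em_def stiefel_def)
  then show ?thesis using dY d1 by (auto simp: e_def)
qed

lemma powr_subadd:
  fixes a b q :: real
  assumes a: "0 \<le> a" and b: "0 \<le> b" and q: "0 < q" "q \<le> 1"
  shows "(a + b) powr q \<le> a powr q + b powr q"
proof (cases "a + b = 0")
  case True then have "a = 0" "b = 0" using a b by auto
  then show ?thesis by simp
next
  case False
  define s where "s = a + b"
  have s: "0 < s" using False a b by (simp add: s_def)
  have key: "x * s powr (q - 1) \<le> x powr q" if "0 \<le> x" "x \<le> s" for x
  proof (cases "x = 0")
    case True then show ?thesis by simp
  next
    case False
    then have x0: "0 < x" using that by simp
    have "x powr (1 + (q - 1)) = x * x powr (q - 1)" unfolding powr_add using x0 by simp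
    then have "x powr q = x * x powr (q - 1)" by simp
    moreover have "s powr (q - 1) \<le> x powr (q - 1)"
      by (rule powr_mono2') (use q x0 that in auto)
    ultimately show ?thesis using x0 by (simp add: mult_left_mono)
  qed
  have "s powr q = s * s powr (q - 1)"
  proof -
    have "s powr (1 + (q - 1)) = s * s powr (q - 1)" unfolding powr_add using s by simp
    then show ?thesis by simp
  qed
  also have "\<dots> = a * s powr (q - 1) + b * s powr (q - 1)" by (simp add: s_def algebra_simps)
  also have "\<dots> \<le> a powr q + b powr q"
    using key[of a] key[of b] a b by (simp add: s_def add_mono)
  finally show ?thesis by (simp add: s_def)
qed

lemma powr_sq_le:
  fixes e q :: real
  assumes "0 \<le> e" "e \<le> 1" "1/2 \<le> q"
  shows "(e^2) powr q \<le> e"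
proof -
  have "e^2 = e powr 2" using assms by (simp add: powr_realpow'[of e 2, simplified])
  then have "(e^2) powr q = e powr (2 * q)" by (simp add: powr_powr)
  also have "\<dots> \<le> e powr 1" by (rule powr_mono') (use assms in auto)
  also have "\<dots> = e" using assms by simp
  finally show ?thesis .
qed

lemma loclip_cont:
  assumes "locally_lipschitz F"
  shows "isCont F x"
proof -
  from assms obtain e L where e: "e > 0" and L: "\<forall>y\<in>ball x e. \<forall>z\<in>ball x e. dist (F y) (F z) \<le> L * dist y z"
    unfolding locally_lipschitz_def by blast
  show ?thesis unfolding continuous_at_eps_delta
  proof (intro allI impI)
    fix d :: real assume d: "d > 0"
    define r where "r = min e (d / (\<bar>L\<bar> + 1))"
    have r: "r > 0" using e d by (simp add: r_def)
    show "\<exists>r>0. \<forall>x'. dist x' x < r \<longrightarrow> dist (F x') (F x) < d"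
    proof (intro exI[of _ r] conjI allI impI r)
      fix x' assume x': "dist x' x < r"
      have "dist (F x') (F x) \<le> L * dist x' x"
        using L x' e by (auto simp: r_def dist_commute)
      also have "\<dots> \<le> \<bar>L\<bar> * dist x' x" by (simp add: mult_right_mono)
      also have "\<dots> \<le> \<bar>L\<bar> * r" using x' by (simp add: mult_left_mono)
      also have "\<dots> < (\<bar>L\<bar> + 1) * (d / (\<bar>L\<bar> + 1))"
      proof -
        have "\<bar>L\<bar> * r \<le> \<bar>L\<bar> * (d / (\<bar>L\<bar> + 1))" by (intro mult_left_mono) (auto simp: r_def)
        also have "\<dots> < (\<bar>L\<bar> + 1) * (d / (\<bar>L\<bar> + 1))" using d by (intro mult_strict_right_mono) auto
        finally show ?thesis .
      qed
      also have "\<dots> = d" by simp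
      finally show "dist (F x') (F x) < d" .
    qed
  qed
qed

lemma Omega_norm:
  assumes "X \<in> (Omega :: (real^'p^'n) set)"
  shows "norm X \<le> 2 * real (CARD('n) * CARD('p))"
proof -
  define N where "N = real (CARD('n) * CARD('p))"
  have "1 \<le> CARD('n) * CARD('p)" by (simp add: Suc_le_eq)
  then have N1: "1 \<le> N" unfolding N_def by (metis of_nat_1 of_nat_le_iff)
  have c: "(X$i$j)^2 \<le> (13/12)^2" for i j
  proof -
    have "\<bar>X$i$j\<bar> \<le> onorm ((*v) X)" by (rule matrix_component_le_onorm)
    also have "\<dots> \<le> 13/12" using assms by (simp add: Omega_def)
    finally show ?thesis by (simp add: abs_le_square_iff[symmetric]) 
  qed
  have "(norm X)^2 \<le> (\<Sum>i\<in>(UNIV::'n set). \<Sum>j\<in>(UNIV::'p set). (13/12::real)^2)"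
    unfolding norm_sq_mat by (intro sum_mono c)
  also have "\<dots> = N * (169/144)" by (simp add: N_def power2_eq_square)
  also have "\<dots> \<le> (2 * N)^2" using N1 by (simp add: power2_eq_square)
  finally show ?thesis unfolding N_def[symmetric] by (rule power2_le_imp_le) (use N1 in simp)
qed

lemma Phi_cont: "isCont Phi Y"
  using deriv_Phi by (rule has_derivative_continuous)

lemma M1_bound:
  assumes "locally_lipschitz (egrad f)" "X \<in> (Omega :: (real^'p^'n) set)"
  shows "norm (egrad f (Phi X)) \<le> M1 f"
proof -
  define B where "B = 2 * real (CARD('n) * CARD('p))"
  have cont: "continuous_on (cball 0 B) (\<lambda>X::real^'p^'n. norm (egrad f (Phi X)))"
    by (intro continuous_at_imp_continuous_on ballI continuous_intros
        isCont_o2[OF Phi_cont loclip_cont[OF assms(1)]])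
  have "compact ((\<lambda>X::real^'p^'n. norm (egrad f (Phi X))) ` cball 0 B)"
    by (intro compact_continuous_image cont compact_cball)
  then have bdd: "bdd_above ((\<lambda>X::real^'p^'n. norm (egrad f (Phi X))) ` cball 0 B)"
    by (intro bounded_imp_bdd_above compact_imp_bounded)
  have sub: "(Omega :: (real^'p^'n) set) \<subseteq> cball 0 B"
    using Omega_norm by (auto simp: B_def)
  have "bdd_above ((\<lambda>X::real^'p^'n. norm (egrad f (Phi X))) ` Omega)"
    by (rule bdd_above_mono[OF bdd]) (use sub in auto)
  then have "norm (egrad f (Phi X)) \<le> (SUP X\<in>(Omega :: (real^'p^'n) set). norm (egrad f (Phi X)))"
    using assms(2) by (rule cSUP_upper2) simp
  then show ?thesis by (simp add: M1_def Gfun_def Phi_def[symmetric])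
qed

lemma DPhi_alt: "DPhi Y H = (3/2) *\<^sub>R H - (1/2) *\<^sub>R (H ** (transpose Y ** Y) + Y ** transpose H ** Y + Y ** transpose Y ** H)"
  unfolding DPhi_def Acal_def
  apply (simp only: mm_simps matrix_mul_lid matrix_mul_rid)
  apply (simp add: vec_eq_iff algebra_simps)
  done

lemma n3: "norm ((A::real^'a^'b) ** (B::real^'c^'a) ** (C::real^'d^'c)) \<le> norm A * norm B * norm C"
proof -
  have "norm (A ** B ** C) \<le> norm (A ** B) * norm C" by (rule norm_mm)
  also have "\<dots> \<le> norm A * norm B * norm C" by (intro mult_right_mono norm_mm norm_ge_zero)
  finally show ?thesis .
qed

lemma norm_DPhi: "norm (DPhi Y H) \<le> (3/2 + 3/2 * (norm Y)^2) * norm H"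
proof -
  define a where "a = H ** (transpose Y ** Y)"
  define b where "b = Y ** transpose H ** Y"
  define c where "c = Y ** transpose Y ** H"
  have ta: "norm a \<le> norm H * (norm Y * norm Y)"
    unfolding a_def using n3[of H "transpose Y" Y] by (simp add: matrix_mul_assoc norm_transpose mult_ac)
  have tb: "norm b \<le> norm Y * norm H * norm Y"
    unfolding b_def using n3[of Y "transpose H" Y] by (simp add: norm_transpose)
  have tc: "norm c \<le> norm Y * norm Y * norm H"
    unfolding c_def using n3[of Y "transpose Y" H] by (simp add: norm_transpose)
  have "norm (DPhi Y H) \<le> norm ((3/2) *\<^sub>R H) + norm ((1/2) *\<^sub>R (a + b + c))"
    unfolding DPhi_alt a_def b_def c_def by (rule norm_triangle_ineq4)
  also have "\<dots> = 3/2 * norm H + 1/2 * norm (a + b + c)" by simp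
  also have "norm (a + b + c) \<le> norm a + norm b + norm c"
    using norm_triangle_ineq[of "a + b" c] norm_triangle_ineq[of a b] by linarith
  finally have "norm (DPhi Y H) \<le> 3/2 * norm H + 1/2 * (norm a + norm b + norm c)" by simp
  also have "\<dots> \<le> 3/2 * norm H + 1/2 * (3 * (norm H * (norm Y * norm Y)))"
    using ta tb tc by (simp add: mult_ac)
  also have "\<dots> = (3/2 + 3/2 * (norm Y)^2) * norm H" by (simp add: algebra_simps power2_eq_square)
  finally show ?thesis .
qed

lemma bil_diff:
  fixes P :: "'b::real_normed_vector \<Rightarrow> 'b \<Rightarrow> 'a::real_normed_vector"
  assumes "P Y Y - P Z Z = P Y (Y - Z) + P (Y - Z) Z" and "\<And>U V. norm (P U V) \<le> c * norm U * norm V"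
  shows "norm (P Y Y - P Z Z) \<le> c * (norm Y + norm Z) * norm (Y - Z)"
proof -
  have "norm (P Y Y - P Z Z) \<le> norm (P Y (Y - Z)) + norm (P (Y - Z) Z)"
    unfolding assms(1) by (rule norm_triangle_ineq)
  also have "\<dots> \<le> c * norm Y * norm (Y - Z) + c * norm (Y - Z) * norm Z"
    by (intro add_mono assms(2))
  also have "\<dots> = c * (norm Y + norm Z) * norm (Y - Z)" by (simp add: algebra_simps)
  finally show ?thesis .
qed

lemma norm_DPhi_diff:
  fixes Y Z H :: "real^'p^'n"
  shows "norm (DPhi Y H - DPhi Z H) \<le> 3/2 * norm H * (norm Y + norm Z) * norm (Y - Z)"
proof -
  define P1 where "P1 U V = H ** (transpose U ** V)" for U V :: "real^'p^'n"
  define P2 where "P2 U V = U ** transpose H ** V" for U V :: "real^'p^'n"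
  define P3 where "P3 U V = U ** transpose V ** H" for U V :: "real^'p^'n"
  have i1: "P1 Y Y - P1 Z Z = P1 Y (Y - Z) + P1 (Y - Z) Z" by (simp add: P1_def mm_simps algebra_simps)
  have b1: "norm (P1 U V) \<le> norm H * norm U * norm V" for U V
      unfolding P1_def using n3[of H "transpose U" V] by (simp add: matrix_mul_assoc norm_transpose)
  have d1: "norm (P1 Y Y - P1 Z Z) \<le> norm H * (norm Y + norm Z) * norm (Y - Z)"
    by (rule bil_diff[of P1 Y Z "norm H", OF i1 b1])
  have i2: "P2 Y Y - P2 Z Z = P2 Y (Y - Z) + P2 (Y - Z) Z" by (simp add: P2_def mm_simps algebra_simps)
  have b2: "norm (P2 U V) \<le> norm H * norm U * norm V" for U V
      unfolding P2_def using n3[of U "transpose H" V] by (simp add: norm_transpose mult_ac)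
  have d2: "norm (P2 Y Y - P2 Z Z) \<le> norm H * (norm Y + norm Z) * norm (Y - Z)"
    by (rule bil_diff[of P2 Y Z "norm H", OF i2 b2])
  have i3: "P3 Y Y - P3 Z Z = P3 Y (Y - Z) + P3 (Y - Z) Z" by (simp add: P3_def mm_simps algebra_simps)
  have b3: "norm (P3 U V) \<le> norm H * norm U * norm V" for U V
      unfolding P3_def using n3[of U "transpose V" H] by (simp add: norm_transpose mult_ac)
  have d3: "norm (P3 Y Y - P3 Z Z) \<le> norm H * (norm Y + norm Z) * norm (Y - Z)"
    by (rule bil_diff[of P3 Y Z "norm H", OF i3 b3])
  have eq: "DPhi Y H - DPhi Z H = -(1/2) *\<^sub>R ((P1 Y Y - P1 Z Z) + (P2 Y Y - P2 Z Z) + (P3 Y Y - P3 Z Z))"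
    unfolding DPhi_alt P1_def P2_def P3_def by (simp add: algebra_simps)
  have "norm (DPhi Y H - DPhi Z H) \<le> 1/2 * (norm (P1 Y Y - P1 Z Z) + norm (P2 Y Y - P2 Z Z) + norm (P3 Y Y - P3 Z Z))"
  proof -
    have "norm ((P1 Y Y - P1 Z Z) + (P2 Y Y - P2 Z Z) + (P3 Y Y - P3 Z Z))
        \<le> norm (P1 Y Y - P1 Z Z) + norm (P2 Y Y - P2 Z Z) + norm (P3 Y Y - P3 Z Z)"
      using norm_triangle_ineq[of "(P1 Y Y - P1 Z Z) + (P2 Y Y - P2 Z Z)" "P3 Y Y - P3 Z Z"]
        norm_triangle_ineq[of "P1 Y Y - P1 Z Z" "P2 Y Y - P2 Z Z"] by linarith
    then show ?thesis unfolding eq by simp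
  qed
  also have "\<dots> \<le> 1/2 * (3 * (norm H * (norm Y + norm Z) * norm (Y - Z)))"
    using d1 d2 d3 by simp
  finally show ?thesis by simp
qed

lemma abs_inner_le: "\<bar>a \<bullet> b\<bar> \<le> norm a * norm b"
  by (rule Cauchy_Schwarz_ineq2)

lemma normal_bound:
  fixes Y :: "real^'p^'n"
  assumes fdiff: "\<forall>Z. f differentiable (at Z)"
    and e: "norm (Em Y) \<le> 1/4" and G: "norm (egrad f (Phi Y)) \<le> \<beta> / 12" and b: "1 \<le> \<beta>"
  shows "norm (Em Y) \<le> 4 * norm (egrad (hfun f \<beta>) Y)"
proof -
  define E where "E = Em Y"
  define ee where "ee = norm E"
  define G where "G = egrad f (Phi Y)"
  define gh where "gh = egrad (hfun f \<beta>) Y"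
  have e0: "0 \<le> ee" "ee \<le> 1/4" using e by (auto simp: ee_def E_def)
  have ip: "gh \<bullet> (Y ** E) = -(3/2) * (G \<bullet> (Y ** (E ** E))) + \<beta> * (E \<bullet> (E ** E) + E \<bullet> E)"
  proof -
    have "gh \<bullet> (Y ** E) = G \<bullet> DPhi Y (Y ** E) + \<beta> / 2 * (E \<bullet> (transpose Y ** (Y ** E) + transpose (Y ** E) ** Y))"
      unfolding gh_def G_def E_def by (rule egrad_h[OF fdiff])
    also have "\<dots> = -(3/2) * (G \<bullet> (Y ** (E ** E))) + \<beta> / 2 * (E \<bullet> (2 *\<^sub>R (E ** E + E)))"
      unfolding E_def DPhi_YE pen_YE by simp
    also have "\<dots> = -(3/2) * (G \<bullet> (Y ** (E ** E))) + \<beta> * (E \<bullet> (E ** E) + E \<bullet> E)"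
      by (simp add: inner_add_right)
    finally show ?thesis .
  qed
  have EE: "norm (E ** E) \<le> ee^2" using norm_mm[of E E] by (simp add: ee_def power2_eq_square)
  have a: "\<bar>G \<bullet> (Y ** (E ** E))\<bar> \<le> \<beta> / 12 * (9/8 * ee^2)"
  proof -
    have "\<bar>G \<bullet> (Y ** (E ** E))\<bar> \<le> norm G * norm (Y ** (E ** E))" by (rule abs_inner_le)
    also have "\<dots> \<le> \<beta> / 12 * (9/8 * ee^2)"
    proof (rule mult_mono)
      show "norm G \<le> \<beta> / 12" using G by (simp add: G_def)
      have "norm (Y ** (E ** E)) \<le> 9/8 * norm (E ** E)" using norm_YM[OF e] by (simp add: E_def)
      also have "\<dots> \<le> 9/8 * ee^2" using EE by simp
      finally show "norm (Y ** (E ** E)) \<le> 9/8 * ee^2" .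
    qed (use b in auto)
    finally show ?thesis .
  qed
  have c: "\<bar>E \<bullet> (E ** E)\<bar> \<le> ee^2 / 4"
  proof -
    have "\<bar>E \<bullet> (E ** E)\<bar> \<le> ee * norm (E ** E)" unfolding ee_def by (rule abs_inner_le)
    also have "\<dots> \<le> (1/4) * ee^2" by (intro mult_mono EE e0) auto
    finally show ?thesis by simp
  qed
  have c2: "\<beta> * (E \<bullet> (E ** E)) \<ge> - (\<beta> * (ee^2 / 4))"
  proof -
    have "- (ee^2/4) \<le> E \<bullet> (E ** E)" using c by linarith
    then have "\<beta> * (- (ee^2/4)) \<le> \<beta> * (E \<bullet> (E ** E))" using b by (intro mult_left_mono) auto
    then show ?thesis by simp
  qed
  have EEi: "E \<bullet> E = ee^2" by (simp add: ee_def power2_norm_eq_inner)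
  have low: "gh \<bullet> (Y ** E) \<ge> \<beta> * ee^2 / 2"
  proof -
    have d: "\<beta> * (E \<bullet> (E ** E) + E \<bullet> E) = \<beta> * (E \<bullet> (E ** E)) + \<beta> * ee^2" by (simp add: EEi distrib_left)
    have a2: "- (\<beta> / 12 * (9/8 * ee^2)) \<le> G \<bullet> (Y ** (E ** E))" "G \<bullet> (Y ** (E ** E)) \<le> \<beta> / 12 * (9/8 * ee^2)"
      using a by linarith+
    have "\<beta> * ee^2 \<ge> 0" using b by simp
    then show ?thesis unfolding ip d using a2 c2 by linarith
  qed
  have up: "gh \<bullet> (Y ** E) \<le> norm gh * (9/8 * ee)"
  proof -
    have "gh \<bullet> (Y ** E) \<le> norm gh * norm (Y ** E)" by (rule norm_cauchy_schwarz)
    also have "\<dots> \<le> norm gh * (9/8 * ee)" using norm_YM[OF e, of E] by (intro mult_left_mono) (auto simp: ee_def E_def)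
    finally show ?thesis .
  qed
  have "ee^2 / 2 \<le> \<beta> * ee^2 / 2" using mult_right_mono[OF b, of "ee^2"] by simp
  then have key: "ee * (ee / 2) \<le> ee * (norm gh * 9/8)" using low up by (simp add: power2_eq_square algebra_simps)
  show ?thesis
  proof (cases "ee = 0")
    case True then show ?thesis by (simp add: ee_def E_def)
  next
    case False
    then have "ee / 2 \<le> norm gh * 9/8" using key e0 by (simp add: mult_le_cancel_left)
    then have "ee \<le> 4 * norm gh" using norm_ge_zero[of gh] by linarith
    then show ?thesis by (simp add: ee_def E_def gh_def)
  qed
qed

lemma tangent_bound:
  fixes Y Z :: "real^'p^'n"
  assumes fdiff: "\<forall>Z. f differentiable (at Z)" and Z: "Z \<in> stiefel"
    and e: "norm (Em Y) \<le> 1/4"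
    and lip: "norm (egrad f (Phi Y) - egrad f Z) \<le> L * norm (Phi Y - Z)"
    and dPZ: "norm (Phi Y - Z) \<le> 2 * (norm (Em Y))^2"
    and dYZ: "norm (Y - Z) \<le> 2 * norm (Em Y)"
    and nY: "norm Y \<le> KY" and nZ: "norm Z \<le> KY" and nN: "norm (egrad f Z) \<le> KG"
    and L: "0 \<le> L" and b: "0 \<le> \<beta>"
  shows "norm (rgrad f Z) \<le> norm (egrad (hfun f \<beta>) Y)
          + (L * (3/2 + 3/2 * KY^2) + 6 * KG * KY + \<beta> * KY) * norm (Em Y)"
proof -
  define E where "E = Em Y"
  define ee where "ee = norm E"
  define G where "G = egrad f (Phi Y)"
  define N where "N = egrad f Z"
  define R where "R = rgrad f Z"
  define gh where "gh = egrad (hfun f \<beta>) Y"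
  define KD where "KD = 3/2 + 3/2 * KY^2"
  define K where "K = L * KD + 6 * KG * KY + \<beta> * KY"
  have e0: "0 \<le> ee" "ee \<le> 1/4" using e by (auto simp: ee_def E_def)
  have KY0: "0 \<le> KY" using nY norm_ge_zero[of Y] by linarith
  have KG0: "0 \<le> KG" using nN norm_ge_zero[of "egrad f Z"] by linarith
  have KD0: "0 \<le> KD" by (simp add: KD_def)
  have K0: "0 \<le> K" unfolding K_def using L KD0 KG0 KY0 b by simp
  have ip: "gh \<bullet> R = G \<bullet> DPhi Y R + \<beta> / 2 * (E \<bullet> (transpose Y ** R + transpose R ** Y))"
    unfolding gh_def G_def E_def by (rule egrad_h[OF fdiff])
  have split: "G \<bullet> DPhi Y R = N \<bullet> DPhi Z R + (G - N) \<bullet> DPhi Y R + N \<bullet> (DPhi Y R - DPhi Z R)"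
    by (simp add: inner_diff_left inner_diff_right)
  have main: "N \<bullet> DPhi Z R = (norm R)^2"
    using stiefel_R[OF Z, of f] by (simp add: N_def R_def)
  have DY: "norm (DPhi Y R) \<le> KD * norm R"
  proof -
    have "norm (DPhi Y R) \<le> (3/2 + 3/2 * (norm Y)^2) * norm R" by (rule norm_DPhi)
    also have "\<dots> \<le> KD * norm R" unfolding KD_def
      using power_mono[OF nY norm_ge_zero] by (intro mult_right_mono) auto
    finally show ?thesis .
  qed
  have t1: "\<bar>(G - N) \<bullet> DPhi Y R\<bar> \<le> L * KD * ee * norm R"
  proof -
    have "\<bar>(G - N) \<bullet> DPhi Y R\<bar> \<le> norm (G - N) * norm (DPhi Y R)" by (rule abs_inner_le)
    also have "\<dots> \<le> (L * ee) * (KD * norm R)"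
    proof (rule mult_mono)
      have "norm (G - N) \<le> L * norm (Phi Y - Z)" using lip by (simp add: G_def N_def)
      also have "\<dots> \<le> L * (2 * ee^2)" using dPZ L by (intro mult_left_mono) (auto simp: ee_def E_def)
      also have "\<dots> \<le> L * ee"
      proof -
        have "2 * ee^2 \<le> ee" using mult_left_mono[OF e0(2) e0(1)] mult_nonneg_nonneg[OF e0(1) e0(1)] unfolding power2_eq_square by linarith
        then show ?thesis using L by (intro mult_left_mono) auto
      qed
      finally show "norm (G - N) \<le> L * ee" .
    qed (use DY L e0 in auto)
    finally show ?thesis by (simp add: mult_ac)
  qed
  have t2: "\<bar>N \<bullet> (DPhi Y R - DPhi Z R)\<bar> \<le> 6 * KG * KY * ee * norm R"
  proof -
    have "\<bar>N \<bullet> (DPhi Y R - DPhi Z R)\<bar> \<le> norm N * norm (DPhi Y R - DPhi Z R)" by (rule abs_inner_le)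
    also have "\<dots> \<le> KG * (3/2 * norm R * (2 * KY) * (2 * ee))"
    proof (rule mult_mono)
      have "norm (DPhi Y R - DPhi Z R) \<le> 3/2 * norm R * (norm Y + norm Z) * norm (Y - Z)"
        by (rule norm_DPhi_diff)
      also have "\<dots> \<le> 3/2 * norm R * (2 * KY) * (2 * ee)"
        using nY nZ dYZ KY0 by (intro mult_mono) (auto simp: ee_def E_def)
      finally show "norm (DPhi Y R - DPhi Z R) \<le> 3/2 * norm R * (2 * KY) * (2 * ee)" .
    qed (use nN N_def KG0 in auto)
    finally show ?thesis by (simp add: mult_ac)
  qed
  have t3: "\<bar>E \<bullet> (transpose Y ** R + transpose R ** Y)\<bar> \<le> ee * (2 * KY * norm R)"
  proof -
    have "\<bar>E \<bullet> (transpose Y ** R + transpose R ** Y)\<bar> \<le> ee * norm (transpose Y ** R + transpose R ** Y)"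
      unfolding ee_def by (rule abs_inner_le)
    also have "\<dots> \<le> ee * (2 * KY * norm R)"
    proof (rule mult_left_mono)
      have "norm (transpose Y ** R + transpose R ** Y) \<le> norm (transpose Y ** R) + norm (transpose R ** Y)"
        by (rule norm_triangle_ineq)
      also have "\<dots> \<le> norm Y * norm R + norm R * norm Y"
        using norm_mm[of "transpose Y" R] norm_mm[of "transpose R" Y] by (simp add: norm_transpose mult.commute)
      also have "\<dots> \<le> 2 * KY * norm R" using mult_right_mono[OF nY norm_ge_zero[of R]] by (simp add: mult_ac)
      finally show "norm (transpose Y ** R + transpose R ** Y) \<le> 2 * KY * norm R" .
    qed (use e0 in auto)
    finally show ?thesis .
  qed
  have t3b: "\<bar>\<beta> / 2 * (E \<bullet> (transpose Y ** R + transpose R ** Y))\<bar> \<le> \<beta> * KY * ee * norm R"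
  proof -
    have "\<bar>\<beta> / 2 * (E \<bullet> (transpose Y ** R + transpose R ** Y))\<bar> = \<beta> / 2 * \<bar>E \<bullet> (transpose Y ** R + transpose R ** Y)\<bar>"
      using b by (simp add: abs_mult)
    also have "\<dots> \<le> \<beta> / 2 * (ee * (2 * KY * norm R))" using t3 b by (intro mult_left_mono) auto
    finally show ?thesis by (simp add: mult_ac)
  qed
  have low: "gh \<bullet> R \<ge> (norm R)^2 - K * ee * norm R"
  proof -
    have "K * ee * norm R = L * KD * ee * norm R + 6 * KG * KY * ee * norm R + \<beta> * KY * ee * norm R"
      by (simp add: K_def algebra_simps)
    then show ?thesis unfolding ip split main using t1 t2 t3b by (simp add: abs_le_iff)
  qed
  have up: "gh \<bullet> R \<le> norm gh * norm R" by (rule norm_cauchy_schwarz)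
  have "norm R \<le> norm gh + K * ee"
  proof (cases "R = 0")
    case True then show ?thesis using K0 e0 by simp
  next
    case False
    then have Rp: "0 < norm R" by simp
    have "norm R * norm R \<le> norm R * (norm gh + K * ee)"
      using low up by (simp add: power2_eq_square algebra_simps)
    then show ?thesis using Rp by (simp add: mult_le_cancel_left)
  qed
  then show ?thesis by (simp add: R_def gh_def K_def KD_def ee_def E_def)
qed

lemma stiefel_isometry:
  assumes "transpose X ** X = mat 1"
  shows "norm (X *v v) = norm (v::real^'p)"
proof -
  have "(X *v v) \<bullet> (X *v v) = v \<bullet> (transpose X *v (X *v v))"
    by (metis dot_lmul_matrix vector_transpose_matrix)
  also have "\<dots> = v \<bullet> v" by (simp add: matrix_vector_mul_assoc assms)
  finally show ?thesis by (simp add: norm_eq_sqrt_inner)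
qed

lemma stiefel_Omega:
  assumes "X \<in> stiefel"
  shows "X \<in> (Omega :: (real^'p^'n) set)"
proof -
  have "onorm ((*v) X) \<le> 1"
  proof (rule onorm_le)
    fix x :: "real^'p"
    have "transpose X ** X = mat 1" using assms by (simp add: stiefel_def)
    then show "norm (X *v x) \<le> 1 * norm x" by (simp add: stiefel_isometry)
  qed
  then show ?thesis by (simp add: Omega_def)
qed

lemma lip_at:
  assumes "locally_lipschitz F"
  obtains e L where "e > 0" "L \<ge> 0" "\<And>y z. y \<in> ball x e \<Longrightarrow> z \<in> ball x e \<Longrightarrow> dist (F y) (F z) \<le> L * dist y z"
proof -
  from assms obtain e L where e: "e > 0" and L: "\<forall>y\<in>ball x e. \<forall>z\<in>ball x e. dist (F y) (F z) \<le> L * dist y z"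
    unfolding locally_lipschitz_def by blast
  have "dist (F y) (F z) \<le> \<bar>L\<bar> * dist y z" if "y \<in> ball x e" "z \<in> ball x e" for y z
  proof -
    have "dist (F y) (F z) \<le> L * dist y z" using L that by blast
    also have "\<dots> \<le> \<bar>L\<bar> * dist y z" by (intro mult_right_mono) auto
    finally show ?thesis .
  qed
  then show ?thesis using that[of e "\<bar>L\<bar>"] e by auto
qed

theorem mainTheorem19:
  fixes f :: "real^'p^'n \<Rightarrow> real" and X :: "real^'p^'n"
    and \<theta> C \<beta> :: real
  assumes np: "CARD('p) \<le> CARD('n)"
    and fdiff: "\<forall>Y. f differentiable (at Y)"
    and flip: "locally_lipschitz f"
    and gflip: "locally_lipschitz (egrad f)"
    and X: "X \<in> stiefel"
    and theta: "0 < \<theta>" "\<theta> \<le> 1/2"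
    and C: "C > 0"
    and loja: "\<exists>U. open U \<and> X \<in> U \<and>
       (\<forall>Y\<in>U \<inter> stiefel. norm (rgrad f Y) \<ge> C * \<bar>f Y - f X\<bar> powr (1 - \<theta>))"
    and beta: "\<beta> > max (8 * C * M1 f) (max 1 (beta_bar f))"
  shows "\<exists>U'. open U' \<and> X \<in> U' \<and> (\<exists>C'>0. \<forall>Y\<in>U'.
       norm (egrad (hfun f \<beta>) Y) \<ge> C' * \<bar>hfun f \<beta> Y - hfun f \<beta> X\<bar> powr (1 - \<theta>))"
proof -
  define q where "q = 1 - \<theta>"
  have q: "0 < q" "q \<le> 1" "1/2 \<le> q" using theta by (auto simp: q_def)
  have XI: "transpose X ** X = mat 1" using X by (simp add: stiefel_def)
  have EX: "Em X = 0" by (simp add: Em_def XI)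
  have AX: "Acal X = mat 1" by (simp add: Acal_def XI vec_eq_iff mat_def)
  have PX: "Phi X = X" by (simp add: Phi_def AX)
  have hX: "hfun f \<beta> X = f X" by (simp add: hfun_alt PX XI)
  have M1X: "norm (egrad f X) \<le> M1 f" using M1_bound[OF gflip stiefel_Omega[OF X]] PX by simp
  have b12: "12 * M1 f < \<beta>" and b1: "1 < \<beta>" using beta by (auto simp: beta_bar_def)
  define \<eta> where "\<eta> = (\<beta> - 12 * M1 f) / 12"
  have \<eta>: "0 < \<eta>" using b12 by (simp add: \<eta>_def)
  obtain e1 L where e1: "e1 > 0" and L: "L \<ge> 0"
    and Llip: "\<And>y z. y \<in> ball X e1 \<Longrightarrow> z \<in> ball X e1 \<Longrightarrow> dist (egrad f y) (egrad f z) \<le> L * dist y z"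
    using lip_at[OF gflip] by metis
  obtain e2 L2 where e2: "e2 > 0" and L2: "L2 \<ge> 0"
    and L2lip: "\<And>y z. y \<in> ball X e2 \<Longrightarrow> z \<in> ball X e2 \<Longrightarrow> dist (f y) (f z) \<le> L2 * dist y z"
    using lip_at[OF flip] by metis
  obtain U where U: "open U" "X \<in> U"
    and Uloja: "\<And>Y. Y \<in> U \<inter> stiefel \<Longrightarrow> norm (rgrad f Y) \<ge> C * \<bar>f Y - f X\<bar> powr q"
    using loja by (auto simp: q_def)
  obtain e3 where e3: "e3 > 0" "ball X e3 \<subseteq> U" using U open_contains_ball by blast
  define \<rho> where "\<rho> = min (min e1 e2) (min e3 1)"
  have \<rho>: "0 < \<rho>" "\<rho> \<le> e1" "\<rho> \<le> e2" "\<rho> \<le> e3" "\<rho> \<le> 1"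
    using e1 e2 e3 by (auto simp: \<rho>_def)
  define \<epsilon> where "\<epsilon> = min (1/4) (min (\<rho>/4) (\<eta> / (4 * (L + 1))))"
  have \<epsilon>: "0 < \<epsilon>" "\<epsilon> \<le> 1/4" "\<epsilon> \<le> \<rho>/4" "\<epsilon> \<le> \<eta> / (4 * (L + 1))"
  proof -
    have p: "0 < \<eta> / (4 * (L + 1))" using \<eta> L by simp
    show "0 < \<epsilon>" using \<rho> p by (simp add: \<epsilon>_def)
    show "\<epsilon> \<le> 1/4" unfolding \<epsilon>_def by (rule min.cobounded1)
    show "\<epsilon> \<le> \<rho>/4" unfolding \<epsilon>_def by (meson min.cobounded1 min.cobounded2 order_trans)
    show "\<epsilon> \<le> \<eta> / (4 * (L + 1))" unfolding \<epsilon>_def by (meson min.cobounded2 order_trans)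
  qed
  obtain \<delta>0 where \<delta>0: "\<delta>0 > 0" "\<And>Y. dist Y X < \<delta>0 \<Longrightarrow> dist (Em Y) (Em X) < \<epsilon>"
    using continuous_Em[of X, unfolded continuous_at_eps_delta] \<epsilon>(1) by blast
  define \<delta> where "\<delta> = min \<delta>0 (min (\<rho>/4) (\<eta> / (4 * (L + 1))))"
  have \<delta>: "0 < \<delta>" "\<delta> \<le> \<delta>0" "\<delta> \<le> \<rho>/4" "\<delta> \<le> \<eta> / (4 * (L + 1))"
  proof -
    have p: "0 < \<eta> / (4 * (L + 1))" using \<eta> L by simp
    show "0 < \<delta>" using \<rho> p \<delta>0 by (simp add: \<delta>_def)
    show "\<delta> \<le> \<delta>0" unfolding \<delta>_def by (rule min.cobounded1)
    show "\<delta> \<le> \<rho>/4" unfolding \<delta>_def by (meson min.cobounded1 min.cobounded2 order_trans)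
    show "\<delta> \<le> \<eta> / (4 * (L + 1))" unfolding \<delta>_def by (meson min.cobounded2 order_trans)
  qed
  have Lsmall: "L * (\<epsilon> + \<delta>) \<le> \<eta>"
  proof -
    have "L * (\<epsilon> + \<delta>) \<le> (L + 1) * (\<epsilon> + \<delta>)" using \<epsilon> \<delta> by (intro mult_right_mono) auto
    also have "\<dots> \<le> (L + 1) * (\<eta> / (4 * (L + 1)) + \<eta> / (4 * (L + 1)))"
      using \<epsilon> \<delta> L by (intro mult_left_mono add_mono) auto
    also have "\<dots> = \<eta> / 2"
    proof -
      have h: "(L + 1) * (\<eta> / (4 * (L + 1))) = \<eta> / 4"
      proof -
        have ne: "L + 1 \<noteq> 0" using L by simp
        have "(L + 1) * (\<eta> / (4 * (L + 1))) = (L + 1) * (\<eta> / 4) / (L + 1)" by simp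
        also have "\<dots> = \<eta> / 4" using ne by (rule nonzero_mult_div_cancel_left)
        finally show ?thesis .
      qed
      have eq: "(L + 1) * (\<eta> / (4 * (L + 1)) + \<eta> / (4 * (L + 1)))
          = (L + 1) * (\<eta> / (4 * (L + 1))) + (L + 1) * (\<eta> / (4 * (L + 1)))" by (rule distrib_left)
      show ?thesis unfolding eq h by simp
    qed
    finally show ?thesis using \<eta> by simp
  qed
  define KY where "KY = norm X + 1"
  define KG where "KG = norm (egrad f X) + L"
  define K where "K = L * (3/2 + 3/2 * KY^2) + 6 * KG * KY + \<beta> * KY"
  define K2 where "K2 = 2 * L2 + \<beta> / 4"
  define D where "D = 4 * (K2 powr q) + (1 + 4 * K) / C"
  have K0: "0 \<le> K" using L b1 by (simp add: K_def KY_def KG_def)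
  have D0: "0 < D" unfolding D_def using K0 C by (intro add_nonneg_pos) auto
  show ?thesis
  proof (intro exI[of _ "ball X \<delta>"] conjI open_ball exI[of _ "1 / D"] ballI)
    show "X \<in> ball X \<delta>" using \<delta> by simp
    show "0 < 1 / D" using D0 by simp
    fix Y assume Y: "Y \<in> ball X \<delta>"
    define e where "e = norm (Em Y)"
    define gh where "gh = egrad (hfun f \<beta>) Y"
    have dYX: "norm (Y - X) < \<delta>" using Y by (simp add: dist_norm norm_minus_commute)
    have ee: "e < \<epsilon>" using \<delta>0(2)[of Y] Y \<delta> by (simp add: e_def EX dist_norm norm_minus_commute)
    have e0: "0 \<le> e" "e \<le> 1/4" using ee \<epsilon> by (auto simp: e_def)
    obtain Z where Z: "Z \<in> stiefel" and dYZ: "norm (Y - Z) \<le> 2 * e"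
      and dPZ: "norm (Phi Y - Z) \<le> 2 * e^2"
      using proj_exists[of Y] e0 by (auto simp: e_def)
    have dPY: "norm (Phi Y - Y) \<le> 9/16 * e"
    proof -
      have "norm (Phi Y - Y) = 1/2 * norm (Y ** Em Y)" by (simp add: Phi_minus)
      also have "\<dots> \<le> 1/2 * (9/8 * e)" using norm_YM[of Y "Em Y"] e0 by (simp add: e_def)
      finally show ?thesis by simp
    qed
    have dPX: "norm (Phi Y - X) \<le> 9/16 * e + \<delta>"
      using norm_triangle_ineq[of "Phi Y - Y" "Y - X"] dPY dYX by simp
    have dZX: "norm (Z - X) \<le> 2 * e + \<delta>"
      using norm_triangle_ineq[of "Z - Y" "Y - X"] dYZ dYX by (simp add: norm_minus_commute)
    have inb: "W \<in> ball X \<rho>" if "norm (W - X) < \<rho>" for W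
      using that by (simp add: dist_norm norm_minus_commute)
    have Yb: "Y \<in> ball X \<rho>" using dYX \<delta> \<rho> by (intro inb) auto
    have Pb: "Phi Y \<in> ball X \<rho>" using dPX ee \<epsilon> \<delta> \<rho> by (intro inb) auto
    have Zb: "Z \<in> ball X \<rho>" using dZX ee \<epsilon> \<delta> \<rho> by (intro inb) auto
    have Xb: "X \<in> ball X \<rho>" using \<rho> by simp
    have b1': "\<And>W. W \<in> ball X \<rho> \<Longrightarrow> W \<in> ball X e1" using \<rho> by auto
    have b2': "\<And>W. W \<in> ball X \<rho> \<Longrightarrow> W \<in> ball X e2" using \<rho> by auto
    have b3': "\<And>W. W \<in> ball X \<rho> \<Longrightarrow> W \<in> U" using \<rho> e3 by auto
    have glip: "norm (egrad f W - egrad f W') \<le> L * norm (W - W')" if "W \<in> ball X \<rho>" "W' \<in> ball X \<rho>" for W W'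
      using Llip[OF b1'[OF that(1)] b1'[OF that(2)]] by (simp add: dist_norm)
    have flip': "\<bar>f W - f W'\<bar> \<le> L2 * norm (W - W')" if "W \<in> ball X \<rho>" "W' \<in> ball X \<rho>" for W W'
      using L2lip[OF b2'[OF that(1)] b2'[OF that(2)]] by (simp add: dist_norm)
    have G: "norm (egrad f (Phi Y)) \<le> \<beta> / 12"
    proof -
      have "norm (egrad f (Phi Y)) \<le> norm (egrad f X) + norm (egrad f (Phi Y) - egrad f X)"
        by (rule norm_triangle_sub)
      also have "\<dots> \<le> M1 f + L * norm (Phi Y - X)" using M1X glip[OF Pb Xb] by simp
      also have "L * norm (Phi Y - X) \<le> L * (\<epsilon> + \<delta>)"
        using dPX ee e0 L by (intro mult_left_mono) auto
      finally show ?thesis using Lsmall by (simp add: \<eta>_def)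
    qed
    have nrm: "e \<le> 4 * norm gh"
      using normal_bound[OF fdiff _ G] e0 b1 by (simp add: e_def gh_def)
    have nY: "norm Y \<le> KY" using norm_triangle_ineq[of X "Y - X"] dYX \<delta> \<rho> by (simp add: KY_def)
    have nZ: "norm Z \<le> KY" using norm_triangle_ineq[of X "Z - X"] dZX ee \<epsilon> \<delta> \<rho> by (simp add: KY_def)
    have nN: "norm (egrad f Z) \<le> KG"
    proof -
      have "norm (egrad f Z) \<le> norm (egrad f X) + norm (egrad f Z - egrad f X)"
        by (rule norm_triangle_sub)
      also have "\<dots> \<le> norm (egrad f X) + L * norm (Z - X)" using glip[OF Zb Xb] by simp
      also have "L * norm (Z - X) \<le> L * 1" using dZX ee \<epsilon> \<delta> \<rho> L by (intro mult_left_mono) auto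
      finally show ?thesis by (simp add: KG_def)
    qed
    have tan: "norm (rgrad f Z) \<le> norm gh + K * e"
      using tangent_bound[OF fdiff Z _ glip[OF Pb Zb] _ _ nY nZ nN L] e0 dPZ dYZ b1
      by (simp add: e_def gh_def K_def)
    have lojZ: "C * \<bar>f Z - f X\<bar> powr q \<le> norm (rgrad f Z)"
      using Uloja[of Z] Z b3'[OF Zb] by auto
    define a where "a = \<bar>f Z - f X\<bar>"
    have hY: "hfun f \<beta> Y = f (Phi Y) + \<beta> / 4 * e^2" by (simp add: hfun_alt e_def Em_def)
    have dh: "\<bar>hfun f \<beta> Y - hfun f \<beta> X\<bar> \<le> K2 * e^2 + a"
    proof -
      have "\<bar>hfun f \<beta> Y - hfun f \<beta> X\<bar> \<le> \<bar>f (Phi Y) - f Z\<bar> + a + \<beta> / 4 * e^2"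
      proof -
        have nn: "0 \<le> \<beta> / 4 * e^2" using b1 by simp
        show ?thesis unfolding hY hX a_def using nn by arith
      qed
      also have "\<bar>f (Phi Y) - f Z\<bar> \<le> L2 * (2 * e^2)"
        using flip'[OF Pb Zb] dPZ L2 by (meson mult_left_mono order_trans)
      finally show ?thesis by (simp add: K2_def algebra_simps)
    qed
    have K2: "0 \<le> K2" using L2 b1 by (simp add: K2_def)
    have p1: "\<bar>hfun f \<beta> Y - hfun f \<beta> X\<bar> powr q \<le> (K2 * e^2 + a) powr q"
      using dh q by (intro powr_mono2) auto
    also have "\<dots> \<le> (K2 * e^2) powr q + a powr q"
      using K2 q by (intro powr_subadd) (auto simp: a_def)
    also have "(K2 * e^2) powr q \<le> K2 powr q * e"
    proof -
      have "(K2 * e^2) powr q = K2 powr q * (e^2) powr q" using K2 by (simp add: powr_mult)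
      also have "\<dots> \<le> K2 powr q * e" using powr_sq_le[of e q] e0 q by (intro mult_left_mono) auto
      finally show ?thesis .
    qed
    also have "a powr q \<le> norm (rgrad f Z) / C"
      using lojZ C by (simp add: a_def pos_le_divide_eq mult.commute)
    also have "norm (rgrad f Z) / C \<le> (norm gh + K * (4 * norm gh)) / C"
    proof -
      have "K * e \<le> K * (4 * norm gh)" using nrm K0 by (intro mult_left_mono)
      then show ?thesis using tan C by (intro divide_right_mono) auto
    qed
    also have "K2 powr q * e \<le> K2 powr q * (4 * norm gh)" using nrm by (intro mult_left_mono) auto
    finally have "\<bar>hfun f \<beta> Y - hfun f \<beta> X\<bar> powr q \<le> D * norm gh"
      by (simp add: D_def algebra_simps add_divide_distrib)
    then have "1 / D * \<bar>hfun f \<beta> Y - hfun f \<beta> X\<bar> powr q \<le> norm gh"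
      using D0 by (simp add: divide_le_eq mult.commute)
    then show "1 / D * \<bar>hfun f \<beta> Y - hfun f \<beta> X\<bar> powr (1 - \<theta>) \<le> norm (egrad (hfun f \<beta>) Y)"
      by (simp add: q_def gh_def)
  qed
qed

end
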